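(* Let $d,\ell,m$ be positive integers with $m\ge\ell$. Let $H=(V,E)$ be an almost-acyclic $k$-uniform hypergraph with $m$ edges in which every edge is incident to at most $d$ other edges. Then $$\sum_{E'\subseteq E}|\mathcal B_\ell(E')|\le\Big(\frac{(15dN^k)^4m}{\ell}\Big)^{\ell/2}.$$
   Context: $N\ge2$, $\mathbb Z_N=\mathbb Z/N\mathbb Z$. A $k$-uniform hypergraph $(V,E)$ has finite vertex set $V$ and a set $E$ of edges, each an ordered $k$-tuple of distinct vertices; two edges are incident if they share a vertex. It is almost-acyclic if for every $\ell'\ge0$, any $\ell'$ distinct edges together cover at least $\ell'(k-1.1)$ vertices. For $y\in\mathbb Z_N^V$, $\|y\|_{\mathsf H}$ is the number of nonzero coordinates. For $E'\subseteq E$, $\mathcal B(E')$ is the set of maps $B:E'\to\mathbb Z_N^V$ such that for each $e=(v_1,\dots,v_k)\in E'$, $\mathrm{supp}(B(e))\subseteq\{v_1,\dots,v_k\}$ and $|\mathrm{supp}(B(e))|\ge3$; $\Sigma B=\sum_{e\in E'}B(e)$; and $\mathcal B_\ell(E')=\{B\in\mathcal B(E'):\|\Sigma B\|_{\mathsf H}=\ell\}$. *)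

theory Defs
  imports Complex_Main "HOL-Library.FuncSet"
begin

text \<open>Elements of Z_N^V are represented as functions v => nat with values in {0..<N}
  (residue representatives) that vanish outside V.\<close>
definition ZN_vec :: "nat \<Rightarrow> 'v set \<Rightarrow> ('v \<Rightarrow> nat) set" where
  "ZN_vec N V = {y. (\<forall>v. y v < N) \<and> (\<forall>v. v \<notin> V \<longrightarrow> y v = 0)}"

definition supp_vec :: "('v \<Rightarrow> nat) \<Rightarrow> 'v set" where
  "supp_vec y = {v. y v \<noteq> 0}"

definition hamming :: "'v set \<Rightarrow> ('v \<Rightarrow> nat) \<Rightarrow> nat" where
  "hamming V y = card {v \<in> V. y v \<noteq> 0}"

text \<open>A k-uniform hypergraph: finite vertex set V, edges are ordered k-tuples
  (lists of length k) of distinct vertices of V.\<close>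
definition uniform_hypergraph :: "nat \<Rightarrow> 'v set \<Rightarrow> 'v list set \<Rightarrow> bool" where
  "uniform_hypergraph k V E \<longleftrightarrow> finite V \<and>
     (\<forall>e\<in>E. length e = k \<and> distinct e \<and> set e \<subseteq> V)"

definition incident :: "'v list \<Rightarrow> 'v list \<Rightarrow> bool" where
  "incident e e' \<longleftrightarrow> set e \<inter> set e' \<noteq> {}"

definition almost_acyclic :: "nat \<Rightarrow> 'v list set \<Rightarrow> bool" where
  "almost_acyclic k E \<longleftrightarrow>
     (\<forall>F. F \<subseteq> E \<longrightarrow> finite F \<longrightarrow>
        real (card (\<Union>e\<in>F. set e)) \<ge> real (card F) * (real k - 1.1))"

definition SigmaB :: "nat \<Rightarrow> 'v list set \<Rightarrow> ('v list \<Rightarrow> 'v \<Rightarrow> nat) \<Rightarrow> 'v \<Rightarrow> nat" where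
  "SigmaB N E' B = (\<lambda>v. (\<Sum>e\<in>E'. B e v) mod N)"

definition calB :: "nat \<Rightarrow> 'v set \<Rightarrow> 'v list set \<Rightarrow> ('v list \<Rightarrow> 'v \<Rightarrow> nat) set" where
  "calB N V E' = {B \<in> E' \<rightarrow>\<^sub>E ZN_vec N V.
       \<forall>e\<in>E'. supp_vec (B e) \<subseteq> set e \<and> card (supp_vec (B e)) \<ge> 3}"

definition calB_l :: "nat \<Rightarrow> 'v set \<Rightarrow> 'v list set \<Rightarrow> nat \<Rightarrow> ('v list \<Rightarrow> 'v \<Rightarrow> nat) set" where
  "calB_l N V E' l = {B \<in> calB N V E'. hamming V (SigmaB N E' B) = l}"

end

theory Submission
  imports Defs
begin



definition adjE :: "'v list \<Rightarrow> 'v list \<Rightarrow> bool" where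
  "adjE e e' \<longleftrightarrow> e \<noteq> e' \<and> incident e e'"

lemma adjE_sym: "adjE x y \<Longrightarrow> adjE y x"
  unfolding adjE_def incident_def by auto

lemma adjE_irr: "\<not> adjE x x"
  unfolding adjE_def by auto

definition Rel :: "'v list set \<Rightarrow> ('v list \<times> 'v list) set" where
  "Rel X = {(x,y). x \<in> X \<and> y \<in> X \<and> adjE x y}"

definition cmp :: "'v list set \<Rightarrow> 'v list \<Rightarrow> 'v list set" where
  "cmp X x = {y. (x,y) \<in> (Rel X)\<^sup>*}"

definition conn :: "'v list set \<Rightarrow> bool" where
  "conn C \<longleftrightarrow> (\<forall>x\<in>C. \<forall>y\<in>C. (x,y) \<in> (Rel C)\<^sup>*)"

lemma rel_in: "(x,y) \<in> (Rel X)\<^sup>* \<Longrightarrow> x \<in> X \<Longrightarrow> y \<in> X"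
  by (induct rule: rtrancl_induct) (auto simp: Rel_def)

lemma rel_sym: "(x,y) \<in> (Rel X)\<^sup>* \<Longrightarrow> (y,x) \<in> (Rel X)\<^sup>*"
proof (induct rule: rtrancl_induct)
  case base then show ?case by simp
next
  case (step y z)
  then have "(z,y) \<in> Rel X" by (auto simp: Rel_def adjE_sym)
  then show ?case using step by (meson converse_rtrancl_into_rtrancl)
qed

lemma rel_lift: "(u,y) \<in> (Rel X)\<^sup>* \<Longrightarrow> (u,y) \<in> (Rel (cmp X u))\<^sup>*"
proof (induct rule: rtrancl_induct)
  case base then show ?case by simp
next
  case (step y z)
  have "y \<in> cmp X u" "z \<in> cmp X u" using step unfolding cmp_def by auto
  then have "(y,z) \<in> Rel (cmp X u)" using step(2) by (auto simp: Rel_def)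
  then show ?case using step by (meson rtrancl_into_rtrancl)
qed

lemma cmp_conn: "conn (cmp X u)"
  unfolding conn_def
proof (intro ballI)
  fix x y assume "x \<in> cmp X u" "y \<in> cmp X u"
  then have "(u,x) \<in> (Rel (cmp X u))\<^sup>*" "(u,y) \<in> (Rel (cmp X u))\<^sup>*"
    using rel_lift unfolding cmp_def by auto
  then show "(x,y) \<in> (Rel (cmp X u))\<^sup>*" using rel_sym by (meson rtrancl_trans)
qed

lemma cmp_self: "u \<in> cmp X u"
  unfolding cmp_def by simp

lemma cmp_sub: "u \<in> X \<Longrightarrow> cmp X u \<subseteq> X"
  unfolding cmp_def using rel_in by auto

lemma cmp_eq: "y \<in> cmp X x \<Longrightarrow> cmp X y = cmp X x"
proof -
  assume y: "y \<in> cmp X x"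
  then have xy: "(x,y) \<in> (Rel X)\<^sup>*" by (simp add: cmp_def)
  have yx: "(y,x) \<in> (Rel X)\<^sup>*" using rel_sym[OF xy] .
  show ?thesis
  proof
    show "cmp X y \<subseteq> cmp X x" unfolding cmp_def using xy by (auto dest: rtrancl_trans)
    show "cmp X x \<subseteq> cmp X y" unfolding cmp_def using yx by (auto dest: rtrancl_trans)
  qed
qed

lemma cmp_out: "x \<in> X \<Longrightarrow> y \<in> cmp X x \<Longrightarrow> z \<in> X \<Longrightarrow> z \<notin> cmp X x \<Longrightarrow> \<not> adjE y z"
proof
  assume a: "x \<in> X" "y \<in> cmp X x" "z \<in> X" "z \<notin> cmp X x" "adjE y z"
  have "y \<in> X" using a cmp_sub by auto
  then have "(y,z) \<in> Rel X" using a by (auto simp: Rel_def)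
  moreover have "(x,y) \<in> (Rel X)\<^sup>*" using a(2) by (simp add: cmp_def)
  ultimately have "(x,z) \<in> (Rel X)\<^sup>*" by (meson rtrancl_into_rtrancl)
  then show False using a(4) by (simp add: cmp_def)
qed

fun run :: "('a \<Rightarrow> nat \<Rightarrow> 'a) \<Rightarrow> 'a list \<Rightarrow> nat option list \<Rightarrow> 'a set" where
  "run nb st [] = {}"
| "run nb [] (c # w) = {}"
| "run nb (x # st) (None # w) = run nb st w"
| "run nb (x # st) (Some j # w) = insert (nb x j) (run nb (nb x j # x # st) w)"

lemma code_ex:
  assumes nbr: "\<forall>x\<in>Dom. \<forall>y\<in>Dom. adjE x y \<longrightarrow> (\<exists>j<d. nb x j = y)"
  shows "finite C \<Longrightarrow> conn C \<Longrightarrow> r \<in> C \<Longrightarrow> C \<subseteq> Dom \<Longrightarrow>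
    \<exists>cd. length cd = 2*(card C - 1) \<and> set cd \<subseteq> insert None (Some ` {..<d})
      \<and> length (filter (\<lambda>x. x \<noteq> None) cd) = card C - 1
      \<and> (\<forall>st w. run nb (r#st) (cd @ w) = (C - {r}) \<union> run nb (r#st) w)"
proof (induction "card C" arbitrary: C r rule: less_induct)
  case less
  show ?case
  proof (cases "C = {r}")
    case True then show ?thesis by (intro exI[of _ "[]"]) auto
  next
    case False
    then obtain x where x: "x \<in> C" "x \<noteq> r" using less.prems by auto
    have "(r,x) \<in> (Rel C)\<^sup>*" using less.prems(2) x(1) less.prems(3) unfolding conn_def by blast
    then obtain u where ru: "(r,u) \<in> Rel C" using x(2) by (metis converse_rtranclE)
    hence u: "u \<in> C" "adjE r u" "u \<noteq> r" using adjE_irr unfolding Rel_def by auto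
    define D where "D = C - {r}"
    define C1 where "C1 = cmp D u"
    define C2 where "C2 = C - C1"
    have uD: "u \<in> D" using u D_def by auto
    have C1D: "C1 \<subseteq> D" using cmp_sub[OF uD] C1_def by simp
    have uC1: "u \<in> C1" unfolding C1_def by (rule cmp_self)
    have rC2: "r \<in> C2" using C1D D_def less.prems(3) C2_def by auto
    have fin1: "finite C1" "finite C2" using C1D D_def less.prems(1) C2_def by (auto intro: finite_subset)
    have C1C: "C1 \<subseteq> C" using C1D D_def by auto
    have cC: "card C > 0" using less.prems(1,3) card_gt_0_iff by auto
    have "card C1 \<le> card D" using C1D D_def less.prems(1) by (intro card_mono) auto
    moreover have "card D = card C - 1" using D_def less.prems(1,3) by simp
    ultimately have lt1: "card C1 < card C" using cC by linarith
    have c1p: "card C1 > 0" using uC1 fin1(1) card_gt_0_iff by auto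
    have cardsum: "card C1 + card C2 = card C"
      using card_Diff_subset[OF fin1(1) C1C] card_mono[OF less.prems(1) C1C] C2_def by simp
    have lt2: "card C2 < card C" using cardsum c1p by linarith
    have conn1: "conn C1" by (simp add: C1_def cmp_conn)
    have reach: "\<And>y. (r,y) \<in> (Rel C)\<^sup>* \<Longrightarrow> y \<notin> C1 \<Longrightarrow> (r,y) \<in> (Rel C2)\<^sup>*"
    proof -
      fix y assume "(r,y) \<in> (Rel C)\<^sup>*"
      then show "y \<notin> C1 \<Longrightarrow> (r,y) \<in> (Rel C2)\<^sup>*"
      proof (induct rule: rtrancl_induct)
        case base then show ?case by simp
      next
        case (step y' z)
        show ?case
        proof (cases "z = r")
          case True then show ?thesis by simp
        next
          case False
          then have zD: "z \<in> D" using step(2) D_def by (auto simp: Rel_def)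
          have y'C1: "y' \<notin> C1"
          proof
            assume y1: "y' \<in> C1"
            then have "y' \<in> D" using C1D by auto
            then have "(y',z) \<in> Rel D" using zD step(2) by (auto simp: Rel_def)
            moreover have "(u,y') \<in> (Rel D)\<^sup>*" using y1 by (simp add: C1_def cmp_def)
            ultimately have "(u,z) \<in> (Rel D)\<^sup>*" by (meson rtrancl_into_rtrancl)
            then have "z \<in> C1" by (simp add: C1_def cmp_def)
            then show False using step(4) by simp
          qed
          then have "(r,y') \<in> (Rel C2)\<^sup>*" using step(3) by simp
          moreover have "(y',z) \<in> Rel C2" using step(2) y'C1 step(4) C2_def by (auto simp: Rel_def)
          ultimately show ?thesis by (meson rtrancl_into_rtrancl)
        qed
      qed
    qed
    have conn2: "conn C2"
      unfolding conn_def
    proof (intro ballI)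
      fix a b assume ab: "a \<in> C2" "b \<in> C2"
      have "(r,a) \<in> (Rel C2)\<^sup>*" "(r,b) \<in> (Rel C2)\<^sup>*"
        using reach ab less.prems(2,3) C2_def unfolding conn_def by auto
      then show "(a,b) \<in> (Rel C2)\<^sup>*" using rel_sym by (meson rtrancl_trans)
    qed
    have sub1: "C1 \<subseteq> Dom" "C2 \<subseteq> Dom" using C1D D_def C2_def less.prems(4) by auto
    have c1: "card C1 > 0" "card C2 > 0" using fin1 uC1 rC2 card_gt_0_iff by auto
    obtain cd1 where cd1: "length cd1 = 2*(card C1 - 1)" "set cd1 \<subseteq> insert None (Some ` {..<d})"
      "length (filter (\<lambda>x. x \<noteq> None) cd1) = card C1 - 1"
      "\<forall>st w. run nb (u#st) (cd1 @ w) = (C1 - {u}) \<union> run nb (u#st) w"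
      using less.hyps[OF lt1 fin1(1) conn1 uC1 sub1(1)] by blast
    obtain cd2 where cd2: "length cd2 = 2*(card C2 - 1)" "set cd2 \<subseteq> insert None (Some ` {..<d})"
      "length (filter (\<lambda>x. x \<noteq> None) cd2) = card C2 - 1"
      "\<forall>st w. run nb (r#st) (cd2 @ w) = (C2 - {r}) \<union> run nb (r#st) w"
      using less.hyps[OF lt2 fin1(2) conn2 rC2 sub1(2)] by blast
    obtain j where j: "j < d" "nb r j = u" using nbr u less.prems(3,4) by blast
    show ?thesis
    proof (intro exI[of _ "Some j # cd1 @ None # cd2"] conjI allI)
      show "length (Some j # cd1 @ None # cd2) = 2 * (card C - 1)"
        using cd1(1) cd2(1) cardsum c1 by simp
      show "set (Some j # cd1 @ None # cd2) \<subseteq> insert None (Some ` {..<d})"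
        using cd1(2) cd2(2) j by auto
      show "length (filter (\<lambda>x. x \<noteq> None) (Some j # cd1 @ None # cd2)) = card C - 1"
        using cd1(3) cd2(3) cardsum c1 by simp
      fix st w
      have "run nb (r#st) ((Some j # cd1 @ None # cd2) @ w)
          = insert u ((C1 - {u}) \<union> ((C2 - {r}) \<union> run nb (r#st) w))"
        using cd1(4) cd2(4) j by simp
      also have "\<dots> = (C - {r}) \<union> run nb (r#st) w"
        using uC1 C1D D_def C2_def less.prems(3) by auto
      finally show "run nb (r#st) ((Some j # cd1 @ None # cd2) @ w) = (C - {r}) \<union> run nb (r#st) w" .
    qed
  qed
qed


definition codes :: "nat \<Rightarrow> nat \<Rightarrow> nat \<Rightarrow> nat option list set" where
  "codes d L p = {w. length w = L \<and> set w \<subseteq> insert None (Some ` {..<d})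
      \<and> length (filter (\<lambda>x. x \<noteq> None) w) = p}"

lemma codes_fin: "finite (codes d L p)"
proof -
  have "codes d L p \<subseteq> {w. set w \<subseteq> insert None (Some ` {..<d}) \<and> length w = L}"
    unfolding codes_def by auto
  moreover have "finite {w. set w \<subseteq> insert None (Some ` {..<d}) \<and> length w = L}"
    by (rule finite_lists_length_eq) auto
  ultimately show ?thesis by (rule finite_subset)
qed

lemma codes_card: "card (codes d L p) \<le> 2^L * d^p"
proof (induction L arbitrary: p)
  case 0
  show ?case
  proof (cases p)
    case 0
    then have "codes d 0 p \<subseteq> {[]}" unfolding codes_def by auto
    then have "card (codes d 0 p) \<le> card {[]::nat option list}" by (intro card_mono) auto
    then show ?thesis using 0 by simp
  next
    case (Suc p')
    then have "codes d 0 p = {}" unfolding codes_def by auto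
    then show ?thesis by simp
  qed
next
  case (Suc L)
  show ?case
  proof (cases p)
    case 0
    have "codes d (Suc L) p \<subseteq> Cons None ` codes d L p"
    proof
      fix w assume w: "w \<in> codes d (Suc L) p"
      then obtain x w' where xw: "w = x # w'" unfolding codes_def by (cases w) auto
      have "x = None" using w xw 0 unfolding codes_def by auto
      then show "w \<in> Cons None ` codes d L p" using w xw unfolding codes_def by auto
    qed
    then have "card (codes d (Suc L) p) \<le> card (codes d L p)"
      using codes_fin by (meson card_image_le card_mono finite_imageI order_trans)
    then show ?thesis using Suc.IH[of p] by simp
  next
    case (Suc p')
    have "codes d (Suc L) p \<subseteq> Cons None ` codes d L p \<union> (\<lambda>(j,w). Some j # w) ` ({..<d} \<times> codes d L p')"
    proof
      fix w assume w: "w \<in> codes d (Suc L) p"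
      then obtain x w' where xw: "w = x # w'" unfolding codes_def by (cases w) auto
      show "w \<in> Cons None ` codes d L p \<union> (\<lambda>(j,w). Some j # w) ` ({..<d} \<times> codes d L p')"
      proof (cases x)
        case None
        then show ?thesis using w xw unfolding codes_def by auto
      next
        case (Some j)
        then have "j < d" "w' \<in> codes d L p'" using w xw Suc unfolding codes_def by auto
        then show ?thesis using xw Some by force
      qed
    qed
    then have "card (codes d (Suc L) p) \<le> card (Cons None ` codes d L p \<union> (\<lambda>(j,w). Some j # w) ` ({..<d} \<times> codes d L p'))"
      using codes_fin by (intro card_mono) auto
    also have "\<dots> \<le> card (Cons None ` codes d L p) + card ((\<lambda>(j,w). Some j # w) ` ({..<d} \<times> codes d L p'))"
      by (rule card_Un_le)
    also have "\<dots> \<le> card (codes d L p) + card ({..<d} \<times> codes d L p')"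
      by (intro add_mono card_image_le) (auto simp: codes_fin)
    also have "\<dots> = card (codes d L p) + d * card (codes d L p')"
      by (simp add: card_cartesian_product)
    also have "\<dots> \<le> 2^L * d^p + d * (2^L * d^p')"
      using Suc.IH[of p] Suc.IH[of p'] by (intro add_mono mult_le_mono2) auto
    also have "\<dots> = 2^(Suc L) * d^p" using Suc by simp
    finally show ?thesis .
  qed
qed

definition Conn :: "'v list set \<Rightarrow> 'v list \<Rightarrow> 'v list set set" where
  "Conn Dom r = {C. C \<subseteq> Dom \<and> r \<in> C \<and> conn C}"

lemma conn_sum:
  assumes nbr: "\<forall>x\<in>Dom. \<forall>y\<in>Dom. adjE x y \<longrightarrow> (\<exists>j<d. nb x j = y)"
    and fin: "finite Dom" and d: "d > 0"
  shows "(\<Sum>C\<in>Conn Dom r. (1/(8*real d))^card C) \<le> 1"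
proof -
  define q where "q = 1/(8*real d)"
  have q0: "q > 0" using d q_def by simp
  define P where "P = (\<lambda>C cd. length cd = 2*(card C - 1) \<and> set cd \<subseteq> insert None (Some ` {..<d})
      \<and> length (filter (\<lambda>x. x \<noteq> None) cd) = card C - 1
      \<and> (\<forall>st w. run nb (r#st) (cd @ w) = (C - {r}) \<union> run nb (r#st) w))"
  define cdf where "cdf = (\<lambda>C. SOME cd. P C cd)"
  have Pc: "P C (cdf C)" if "C \<in> Conn Dom r" for C
  proof -
    have "finite C" "conn C" "r \<in> C" "C \<subseteq> Dom" using that fin unfolding Conn_def by (auto intro: finite_subset)
    then have "\<exists>cd. P C cd" unfolding P_def using code_ex[OF nbr] by blast
    then show ?thesis unfolding cdf_def by (rule someI_ex)
  qed
  have dec: "C = insert r (run nb [r] (cdf C))" if "C \<in> Conn Dom r" for C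
  proof -
    have "run nb [r] (cdf C @ []) = (C - {r}) \<union> run nb [r] []" using Pc[OF that] unfolding P_def by blast
    then show ?thesis using that unfolding Conn_def by auto
  qed
  have inj: "inj_on cdf (Conn Dom r)"
    by (rule inj_onI) (metis dec)
  define M where "M = card Dom"
  have cardC: "card C = length (cdf C) div 2 + 1" "card C - 1 < M" if "C \<in> Conn Dom r" for C
  proof -
    have "card C > 0" "card C \<le> M" using that fin unfolding Conn_def M_def
      by (auto simp: card_gt_0_iff intro: finite_subset card_mono)
    then show "card C = length (cdf C) div 2 + 1" "card C - 1 < M" using Pc[OF that] unfolding P_def by auto
  qed
  have img: "cdf ` Conn Dom r \<subseteq> (\<Union>p<M. codes d (2*p) p)"
  proof
    fix cd assume "cd \<in> cdf ` Conn Dom r"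
    then obtain C where C: "C \<in> Conn Dom r" "cd = cdf C" by auto
    then have "cd \<in> codes d (2*(card C - 1)) (card C - 1)" using Pc[OF C(1)] unfolding P_def codes_def by auto
    then show "cd \<in> (\<Union>p<M. codes d (2*p) p)" using cardC(2)[OF C(1)] by auto
  qed
  have "(\<Sum>C\<in>Conn Dom r. q^card C) = (\<Sum>C\<in>Conn Dom r. q^(length (cdf C) div 2 + 1))"
    using cardC(1) by (intro sum.cong) auto
  also have "\<dots> = (\<Sum>cd\<in>cdf ` Conn Dom r. q^(length cd div 2 + 1))"
    by (simp add: sum.reindex[OF inj])
  also have "\<dots> \<le> (\<Sum>cd\<in>(\<Union>p<M. codes d (2*p) p). q^(length cd div 2 + 1))"
    using img q0 codes_fin by (intro sum_mono2) auto
  also have "\<dots> = (\<Sum>p<M. \<Sum>cd\<in>codes d (2*p) p. q^(length cd div 2 + 1))"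
    apply (rule sum.UNION_disjoint)
    apply (simp_all add: codes_fin)
    apply (auto simp: codes_def)
    done
  also have "\<dots> = (\<Sum>p<M. real (card (codes d (2*p) p)) * q^(p+1))"
    by (intro sum.cong refl) (simp add: codes_def)
  also have "\<dots> \<le> (\<Sum>p<M. real (2^(2*p) * d^p) * q^(p+1))"
    using codes_card q0 by (intro sum_mono mult_right_mono) (auto simp del: of_nat_mult of_nat_power)
  also have "\<dots> = (\<Sum>p<M. q * (1/2)^p)"
  proof (intro sum.cong refl)
    fix p
    have "real (2^(2*p) * d^p) * q^(p+1) = q * ((4 * real d) * q)^p"
      by (simp add: power_mult power_mult_distrib)
    also have "(4 * real d) * q = 1/2" using d q_def by simp
    finally show "real (2^(2*p) * d^p) * q^(p+1) = q * (1/2)^p" .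
  qed
  also have "\<dots> = q * (\<Sum>p<M. (1/2::real)^p)" by (simp add: sum_distrib_left)
  also have "\<dots> \<le> q * 2"
  proof -
    have "(\<Sum>p<M. (1/2::real)^p) = (1 - (1/2)^M) / (1 - 1/2)" by (simp add: sum_gp_strict)
    also have "\<dots> \<le> 2" by simp
    finally show ?thesis using q0 by simp
  qed
  also have "\<dots> \<le> 1"
  proof -
    have "real d \<ge> 1" using d by simp
    then show ?thesis unfolding q_def by (simp add: field_simps)
  qed
  finally show ?thesis unfolding q_def .
qed


definition rt :: "'a set \<Rightarrow> 'a" where "rt C = (SOME x. x \<in> C)"

definition roots :: "'v list set \<Rightarrow> 'v list set" where
  "roots X = (\<lambda>e. rt (cmp X e)) ` X"

lemma rt_in: "x \<in> C \<Longrightarrow> rt C \<in> C"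
  unfolding rt_def by (rule someI)

lemma rt_cmp: "rt (cmp X e) \<in> cmp X e"
  by (rule rt_in[OF cmp_self])

lemma roots_in: "r \<in> roots X \<Longrightarrow> r \<in> X"
proof -
  assume "r \<in> roots X"
  then obtain e where e: "e \<in> X" "r = rt (cmp X e)" unfolding roots_def by auto
  then show "r \<in> X" using rt_cmp[of X e] cmp_sub[OF e(1)] by auto
qed

lemma roots_disj:
  assumes "r1 \<in> roots X" "r2 \<in> roots X" "r1 \<noteq> r2"
  shows "cmp X r1 \<inter> cmp X r2 = {}"
proof (rule ccontr)
  assume "cmp X r1 \<inter> cmp X r2 \<noteq> {}"
  then obtain x where x: "x \<in> cmp X r1" "x \<in> cmp X r2" by auto
  obtain e1 e2 where e: "r1 = rt (cmp X e1)" "r2 = rt (cmp X e2)"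
    using assms(1,2) unfolding roots_def by auto
  have "r1 \<in> cmp X e1" "r2 \<in> cmp X e2" using e rt_cmp by simp_all
  then have c: "cmp X r1 = cmp X e1" "cmp X r2 = cmp X e2" using cmp_eq by auto
  have "cmp X r1 = cmp X r2" using cmp_eq[OF x(1)] cmp_eq[OF x(2)] by simp
  then show False using c e assms(3) by simp
qed

lemma roots_cover: "X = (\<Union>r\<in>roots X. cmp X r)"
proof
  show "X \<subseteq> (\<Union>r\<in>roots X. cmp X r)"
  proof
    fix e assume e: "e \<in> X"
    define r where "r = rt (cmp X e)"
    have "r \<in> roots X" using e r_def unfolding roots_def by auto
    moreover have "r \<in> cmp X e" using r_def rt_cmp by simp
    then have "e \<in> cmp X r" using cmp_eq[of r X e] cmp_self[of e X] by simp
    ultimately show "e \<in> (\<Union>r\<in>roots X. cmp X r)" by auto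
  qed
  show "(\<Union>r\<in>roots X. cmp X r) \<subseteq> X"
  proof
    fix x assume "x \<in> (\<Union>r\<in>roots X. cmp X r)"
    then obtain r where "r \<in> roots X" "x \<in> cmp X r" by auto
    then show "x \<in> X" using roots_in cmp_sub by blast
  qed
qed

lemma count_good:
  fixes q :: real and E :: "'v list set"
  assumes finE: "finite E" and GE: "\<And>X. X \<in> G \<Longrightarrow> X \<subseteq> E \<and> 2 * card (roots X) \<le> l"
    and cs: "\<And>r. r \<in> E \<Longrightarrow> (\<Sum>C\<in>Conn E r. q^card C) \<le> 1" and q0: "q \<ge> 0"
  shows "(\<Sum>X\<in>G. q^card X) \<le> real (card {R. R \<subseteq> E \<and> 2 * card R \<le> l})"
proof -
  define \<phi> where "\<phi> = (\<lambda>X::'v list set. (roots X, restrict (cmp X) (roots X)))"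
  define Rs where "Rs = {R. R \<subseteq> E \<and> 2 * card R \<le> l}"
  define Codes where "Codes = Sigma Rs (\<lambda>R. PiE R (Conn E))"
  define F where "F = (\<lambda>(R, g). \<Prod>r\<in>R. q^card ((g::'v list \<Rightarrow> 'v list set) r))"
  have finX: "finite X" if "X \<in> G" for X using GE[OF that] finE by (auto intro: finite_subset)
  have finR: "finite Rs" unfolding Rs_def using finE by simp
  have finConn: "finite (Conn E r)" for r unfolding Conn_def using finE by simp
  have finPi: "\<forall>R\<in>Rs. finite (PiE R (Conn E))"
  proof
    fix R assume "R \<in> Rs"
    then have "finite R" unfolding Rs_def using finE by (auto intro: finite_subset)
    then show "finite (PiE R (Conn E))" using finConn by (intro finite_PiE) auto
  qed
  have finCodes: "finite Codes" unfolding Codes_def using finR finPi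
    by (intro finite_SigmaI) auto
  have w: "q^card X = F (\<phi> X)" if X: "X \<in> G" for X
  proof -
    have fr: "finite (roots X)" unfolding roots_def using finX[OF X] by simp
    have "card X = card (\<Union>r\<in>roots X. cmp X r)" using roots_cover by metis
    also have "\<dots> = (\<Sum>r\<in>roots X. card (cmp X r))"
    proof (rule card_UN_disjoint[OF fr])
      show "\<forall>r\<in>roots X. finite (cmp X r)"
        using finX[OF X] roots_in cmp_sub by (meson finite_subset)
      show "\<forall>r1\<in>roots X. \<forall>r2\<in>roots X. r1 \<noteq> r2 \<longrightarrow> cmp X r1 \<inter> cmp X r2 = {}"
        using roots_disj by blast
    qed
    finally have "q^card X = (\<Prod>r\<in>roots X. q^card (cmp X r))" by (simp add: power_sum)
    then show ?thesis unfolding F_def \<phi>_def by simp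
  qed
  have inj: "inj_on \<phi> G"
  proof (rule inj_onI)
    fix X Y assume "X \<in> G" "Y \<in> G" "\<phi> X = \<phi> Y"
    then have "roots X = roots Y" "restrict (cmp X) (roots X) = restrict (cmp Y) (roots Y)"
      unfolding \<phi>_def by auto
    then have "(\<Union>r\<in>roots X. cmp X r) = (\<Union>r\<in>roots Y. cmp Y r)"
      by (metis (no_types, lifting) SUP_cong restrict_apply')
    then show "X = Y" using roots_cover by metis
  qed
  have img: "\<phi> ` G \<subseteq> Codes"
  proof
    fix c assume "c \<in> \<phi> ` G"
    then obtain X where X: "X \<in> G" "c = \<phi> X" by auto
    have "roots X \<in> Rs" using GE[OF X(1)] roots_in unfolding Rs_def by blast
    moreover have "restrict (cmp X) (roots X) \<in> PiE (roots X) (Conn E)"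
    proof
      fix r assume r: "r \<in> roots X"
      have "cmp X r \<subseteq> E" using cmp_sub[OF roots_in[OF r]] GE[OF X(1)] by blast
      then show "restrict (cmp X) (roots X) r \<in> Conn E r"
        using r unfolding Conn_def by (simp add: cmp_self cmp_conn)
    qed auto
    ultimately show "c \<in> Codes" using X(2) unfolding Codes_def \<phi>_def by auto
  qed
  have F0: "F c \<ge> 0" for c unfolding F_def using q0 by (auto intro: prod_nonneg split: prod.splits)
  have "(\<Sum>X\<in>G. q^card X) = (\<Sum>X\<in>G. F (\<phi> X))" using w by simp
  also have "\<dots> = (\<Sum>c\<in>\<phi> ` G. F c)" by (simp add: sum.reindex[OF inj])
  also have "\<dots> \<le> (\<Sum>c\<in>Codes. F c)" using img finCodes F0 by (intro sum_mono2) auto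
  also have "\<dots> = (\<Sum>R\<in>Rs. \<Sum>g\<in>PiE R (Conn E). \<Prod>r\<in>R. q^card (g r))"
  proof -
    show ?thesis unfolding Codes_def F_def
      by (subst sum.Sigma[OF finR finPi]) (rule refl)
  qed
  also have "\<dots> = (\<Sum>R\<in>Rs. \<Prod>r\<in>R. \<Sum>C\<in>Conn E r. q^card C)"
  proof (intro sum.cong refl)
    fix R assume "R \<in> Rs"
    then have "finite R" unfolding Rs_def using finE by (auto intro: finite_subset)
    then show "(\<Sum>g\<in>PiE R (Conn E). \<Prod>r\<in>R. q^card (g r)) = (\<Prod>r\<in>R. \<Sum>C\<in>Conn E r. q^card C)"
      using prod_sum_PiE[of R "Conn E" "\<lambda>r C. q^card C"] finConn by simp
  qed
  also have "\<dots> \<le> (\<Sum>R\<in>Rs. 1)"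
  proof (intro sum_mono prod_le_1 conjI)
    fix R r assume "R \<in> Rs" "r \<in> R"
    then have "r \<in> E" unfolding Rs_def by auto
    then show "(\<Sum>C\<in>Conn E r. q^card C) \<le> 1" by (rule cs)
    show "0 \<le> (\<Sum>C\<in>Conn E r. q^card C)" using q0 by (simp add: sum_nonneg)
  qed
  also have "\<dots> = real (card Rs)" by simp
  finally show ?thesis unfolding Rs_def .
qed



definition Zs :: "nat \<Rightarrow> 'v set \<Rightarrow> ('v list \<Rightarrow> 'v \<Rightarrow> nat) \<Rightarrow> 'v list set \<Rightarrow> 'v set" where
  "Zs N V B F = {v\<in>V. (\<Sum>e\<in>F. B e v) mod N \<noteq> 0}"

lemma ham_lemma:
  assumes fin: "finite F" and FE: "F \<subseteq> E" and ne: "F \<noteq> {}"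
    and unif: "uniform_hypergraph k V E" and acyc: "almost_acyclic k E"
    and Bv: "\<forall>e\<in>F. (\<forall>v. B e v < N) \<and> supp_vec (B e) \<subseteq> set e \<and> card (supp_vec (B e)) \<ge> 3"
  shows "4 * card F \<le> 5 * card (Zs N V B F) \<and> 2 \<le> card (Zs N V B F)"
proof -
  define U where "U = (\<Union>e\<in>F. set e)"
  define Z where "Z = Zs N V B F"
  define \<mu> where "\<mu> = (\<lambda>v. card {e\<in>F. v \<in> set e})"
  define \<nu> where "\<nu> = (\<lambda>v. card {e\<in>F. B e v \<noteq> 0})"
  have eV: "\<And>e. e \<in> F \<Longrightarrow> length e = k \<and> distinct e \<and> set e \<subseteq> V"
    using unif FE unfolding uniform_hypergraph_def by auto
  have finU: "finite U" unfolding U_def using fin by simp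
  have UV: "U \<subseteq> V" unfolding U_def using eV by auto
  have suppB: "\<And>e v. e \<in> F \<Longrightarrow> B e v \<noteq> 0 \<Longrightarrow> v \<in> set e"
    using Bv unfolding supp_vec_def by auto
  have ZU: "Z \<subseteq> U"
  proof
    fix v assume "v \<in> Z"
    then have "(\<Sum>e\<in>F. B e v) mod N \<noteq> 0" unfolding Z_def Zs_def by auto
    then have "(\<Sum>e\<in>F. B e v) \<noteq> 0" by (metis mod_0)
    then obtain e where "e \<in> F" "B e v \<noteq> 0" by (meson sum.neutral)
    then show "v \<in> U" unfolding U_def using suppB by auto
  qed
  have S1: "(\<Sum>v\<in>U. \<mu> v) = card F * k"
  proof -
    have "(\<Sum>v\<in>U. card {e\<in>F. v \<in> set e}) = (\<Sum>e\<in>F. k)"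
    proof (rule sum_multicount_gen[OF finU fin], intro ballI)
      fix e assume e: "e \<in> F"
      have "{v\<in>U. v \<in> set e} = set e" using e unfolding U_def by auto
      then show "card {v\<in>U. v \<in> set e} = k" using eV[OF e] distinct_card by metis
    qed
    then show ?thesis unfolding \<mu>_def by simp
  qed
  have S2: "(\<Sum>v\<in>U. \<nu> v) \<ge> 3 * card F"
  proof -
    have "(\<Sum>v\<in>U. card {e\<in>F. B e v \<noteq> 0}) = (\<Sum>e\<in>F. card (supp_vec (B e)))"
    proof (rule sum_multicount_gen[OF finU fin], intro ballI)
      fix e assume e: "e \<in> F"
      have "{v\<in>U. B e v \<noteq> 0} = supp_vec (B e)" using e suppB unfolding U_def supp_vec_def by auto
      then show "card {v\<in>U. B e v \<noteq> 0} = card (supp_vec (B e))" by simp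
    qed
    moreover have "(\<Sum>e\<in>F. card (supp_vec (B e))) \<ge> (\<Sum>e\<in>F. 3)"
      using Bv by (intro sum_mono) auto
    ultimately show ?thesis unfolding \<nu>_def by simp
  qed
  have pv: "2 * \<mu> v + of_bool (v \<in> Z) \<ge> 2 + \<nu> v" if v: "v \<in> U" for v
  proof -
    have finF: "finite {e\<in>F. v \<in> set e}" using fin by simp
    have nm: "\<nu> v \<le> \<mu> v" unfolding \<nu>_def \<mu>_def using suppB fin by (intro card_mono) auto
    have m1: "\<mu> v \<ge> 1"
    proof -
      obtain e where "e \<in> F" "v \<in> set e" using v unfolding U_def by auto
      then have "{e\<in>F. v \<in> set e} \<noteq> {}" by auto
      then show ?thesis unfolding \<mu>_def using finF by (simp add: Suc_le_eq card_gt_0_iff)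
    qed
    show ?thesis
    proof (cases "v \<in> Z")
      case True then show ?thesis using nm m1 by simp
    next
      case False
      have "\<nu> v \<noteq> 1"
      proof
        assume "\<nu> v = 1"
        then obtain e0 where e0: "{e\<in>F. B e v \<noteq> 0} = {e0}" unfolding \<nu>_def by (meson card_1_singletonE)
        then have e0F: "e0 \<in> F" "B e0 v \<noteq> 0" by auto
        have "(\<Sum>e\<in>F. B e v) = B e0 v + (\<Sum>e\<in>F - {e0}. B e v)"
          using fin e0F(1) by (simp add: sum.remove)
        also have "(\<Sum>e\<in>F - {e0}. B e v) = 0"
          using e0 by (intro sum.neutral) auto
        finally have "(\<Sum>e\<in>F. B e v) mod N = B e0 v" using Bv e0F(1) by simp
        then have "v \<in> Z" using e0F(2) v UV unfolding Z_def Zs_def by auto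
        then show False using False by simp
      qed
      then show ?thesis using nm m1 False by auto
    qed
  qed
  have "(\<Sum>v\<in>U. 2 + \<nu> v) \<le> (\<Sum>v\<in>U. 2 * \<mu> v + of_bool (v \<in> Z))"
    using pv by (intro sum_mono) auto
  moreover have "(\<Sum>v\<in>U. 2 + \<nu> v) = 2 * card U + (\<Sum>v\<in>U. \<nu> v)"
    by (simp only: sum.distrib sum_constant) simp
  moreover have "(\<Sum>v\<in>U. 2 * \<mu> v + of_bool (v \<in> Z)) = 2 * (\<Sum>v\<in>U. \<mu> v) + card (U \<inter> Z)"
    using finU by (simp only: sum.distrib sum_distrib_left[symmetric] sum_of_bool_eq) simp
  ultimately have "2 * card U + (\<Sum>v\<in>U. \<nu> v) \<le> 2 * (\<Sum>v\<in>U. \<mu> v) + card (U \<inter> Z)"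
    by simp
  moreover have "U \<inter> Z = Z" using ZU by auto
  ultimately have key: "2 * card U + 3 * card F \<le> 2 * (card F * k) + card Z" using S1 S2 by simp
  have ac: "real (card U) \<ge> real (card F) * (real k - 1.1)"
    using acyc fin FE unfolding almost_acyclic_def U_def by blast
  have "4 * card F \<le> 5 * card Z"
  proof -
    have "real (2 * card U + 3 * card F) \<le> real (2 * (card F * k) + card Z)" using key by linarith
    then have "2 * real (card U) + 3 * real (card F) \<le> 2 * real (card F) * real k + real (card Z)" by simp
    then have "4 * real (card F) \<le> 5 * real (card Z)" using ac by (simp add: algebra_simps)
    then show ?thesis by linarith
  qed
  moreover have "2 \<le> card Z"
  proof (cases "card F \<ge> 2")
    case True then show ?thesis using \<open>4 * card F \<le> 5 * card Z\<close> by linarith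
  next
    case False
    moreover have "card F > 0" using ne fin by (simp add: card_gt_0_iff)
    ultimately have "card F = 1" by linarith
    then obtain e where Fe: "F = {e}" by (meson card_1_singletonE)
    then have "U = set e" unfolding U_def by simp
    then have "card U = k" using eV Fe distinct_card by fastforce
    then show ?thesis using key \<open>card F = 1\<close> by simp
  qed
  ultimately show ?thesis unfolding Z_def by simp
qed



lemma card_small_subsets:
  fixes E :: "'a set"
  assumes finE: "finite E" and cE: "card E = m" and l0: "0 < l" and lm: "l \<le> m"
  shows "real (card {R. R \<subseteq> E \<and> 2 * card R \<le> l}) \<le> (2 * exp 1 * real m / real l) powr (real l / 2)"
proof -
  define t :: real where "t = real l / (2 * real m)"
  have m0: "real m > 0" using l0 lm by simp
  have t0: "t > 0" using l0 m0 t_def by simp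
  have "real l \<le> real m" using lm by simp
  then have t1: "t \<le> 1" unfolding t_def using m0 by (simp add: pos_divide_le_eq)
  define c where "c = (1/t) powr (real l / 2)"
  define S where "S = {R. R \<subseteq> E \<and> 2 * card R \<le> l}"
  have finS: "finite S" unfolding S_def using finE by simp
  have one: "1 \<le> t^card R * c" if R: "R \<in> S" for R
  proof -
    have it: "1 \<le> 1/t" using t0 t1 by simp
    have "real (card R) \<le> real l / 2" using R unfolding S_def by simp
    then have "(1/t) powr real (card R) \<le> c" unfolding c_def using it by (intro powr_mono) auto
    moreover have "(1/t) powr real (card R) = (1/t)^card R" using t0 by (simp add: powr_realpow)
    ultimately have "t^card R * (1/t)^card R \<le> t^card R * c" using t0 by (intro mult_left_mono) auto
    moreover have "t^card R * (1/t)^card R = (t * (1/t))^card R" by (rule power_mult_distrib[symmetric])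
    moreover have "t * (1/t) = 1" using t0 by simp
    ultimately show ?thesis by simp
  qed
  have "real (card S) = (\<Sum>R\<in>S. 1)" by simp
  also have "\<dots> \<le> (\<Sum>R\<in>S. t^card R * c)" using one by (intro sum_mono) auto
  also have "\<dots> \<le> (\<Sum>R\<in>Pow E. t^card R * c)"
    using t0 c_def finE unfolding S_def by (intro sum_mono2) auto
  also have "\<dots> = c * (\<Sum>R\<in>Pow E. t^card R)" by (simp add: sum_distrib_left mult.commute)
  also have "(\<Sum>R\<in>Pow E. t^card R) = (1 + t)^m"
  proof -
    have "(\<Prod>x\<in>E. t + 1) = (\<Sum>X\<in>Pow E. (\<Prod>x\<in>X. t) * (\<Prod>x\<in>E-X. 1))"
      by (rule prod_add[OF finE])
    then show ?thesis using cE by (simp add: add.commute)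
  qed
  also have "(1 + t)^m \<le> exp t ^ m"
    using t0 by (intro power_mono) (auto simp: add.commute exp_ge_add_one_self)
  also have "exp t ^ m = exp (real l / 2)"
  proof -
    have "exp t ^ m = exp (real m * t)" by (simp add: exp_of_nat_mult)
    also have "real m * t = real l / 2" using m0 t_def by simp
    finally show ?thesis .
  qed
  finally have "real (card S) \<le> c * exp (real l / 2)"
    using c_def by (simp add: mult_left_mono)
  also have "c * exp (real l / 2) = (2 * real m / real l) powr (real l / 2) * exp 1 powr (real l / 2)"
    unfolding c_def t_def by (simp add: powr_def)
  also have "\<dots> = (2 * real m / real l * exp 1) powr (real l / 2)"
    using m0 l0 by (subst powr_mult) auto
  finally show ?thesis unfolding S_def by (simp add: mult.commute mult.left_commute)
qed


lemma Zs_wit: "v \<in> Zs N V B F \<Longrightarrow> \<exists>e\<in>F. B e v \<noteq> 0"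
proof -
  assume "v \<in> Zs N V B F"
  then have "(\<Sum>e\<in>F. B e v) mod N \<noteq> 0" unfolding Zs_def by auto
  then have "(\<Sum>e\<in>F. B e v) \<noteq> 0" by (metis mod_0)
  then show ?thesis by (meson sum.neutral)
qed

lemma Zs_sub:
  assumes FX: "F \<subseteq> X" and finX: "finite X"
    and sep: "\<forall>e\<in>F. \<forall>e'\<in>X - F. set e \<inter> set e' = {}"
    and sB: "\<forall>e\<in>X. \<forall>v. B e v \<noteq> 0 \<longrightarrow> v \<in> set e"
  shows "Zs N V B F \<subseteq> Zs N V B X"
proof
  fix v assume v: "v \<in> Zs N V B F"
  obtain e where e: "e \<in> F" "B e v \<noteq> 0" using Zs_wit[OF v] by blast
  have ve: "v \<in> set e" using e sB FX by auto
  have "(\<Sum>e\<in>X. B e v) = (\<Sum>e\<in>X - F. B e v) + (\<Sum>e\<in>F. B e v)"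
    using sum.subset_diff[OF FX finX] by simp
  also have "(\<Sum>e\<in>X - F. B e v) = 0"
  proof (rule sum.neutral, rule ballI, rule ccontr)
    fix e' assume e': "e' \<in> X - F" "B e' v \<noteq> 0"
    then have "v \<in> set e'" using sB by auto
    then show False using sep e(1) e'(1) ve by blast
  qed
  finally show "v \<in> Zs N V B X" using v unfolding Zs_def by simp
qed

lemma cmp_sep: "r \<in> X \<Longrightarrow> \<forall>e\<in>cmp X r. \<forall>e'\<in>X - cmp X r. set e \<inter> set e' = {}"
proof (intro ballI)
  fix e e' assume r: "r \<in> X" and e: "e \<in> cmp X r" and e': "e' \<in> X - cmp X r"
  have "\<not> adjE e e'" using cmp_out[OF r e] e' by auto
  moreover have "e \<noteq> e'" using e e' by auto
  ultimately show "set e \<inter> set e' = {}" unfolding adjE_def incident_def by auto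
qed

lemma good_struct:
  assumes unif: "uniform_hypergraph k V E" and acyc: "almost_acyclic k E" and finE: "finite E"
    and XE: "X \<subseteq> E" and B: "B \<in> calB_l N V X l" and l0: "l > 0"
  shows "4 * card X \<le> 5 * l \<and> 2 * card (roots X) \<le> l"
proof -
  have Bv: "\<forall>e\<in>X. (\<forall>v. B e v < N) \<and> supp_vec (B e) \<subseteq> set e \<and> card (supp_vec (B e)) \<ge> 3"
    using B unfolding calB_l_def calB_def ZN_vec_def by (auto simp: PiE_iff)
  have sB: "\<forall>e\<in>X. \<forall>v. B e v \<noteq> 0 \<longrightarrow> v \<in> set e"
    using Bv unfolding supp_vec_def by auto
  have hl: "card (Zs N V B X) = l"
    using B unfolding calB_l_def hamming_def SigmaB_def Zs_def by simp
  have finX: "finite X" using XE finE by (rule finite_subset)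
  have finV: "finite V" using unif unfolding uniform_hypergraph_def by simp
  have Xne: "X \<noteq> {}"
  proof
    assume "X = {}"
    then have "Zs N V B X = {}" unfolding Zs_def by simp
    then show False using hl l0 by simp
  qed
  have a: "4 * card X \<le> 5 * l"
    using ham_lemma[OF finX XE Xne unif acyc Bv] hl by simp
  define R where "R = roots X"
  have finR: "finite R" unfolding R_def roots_def using finX by simp
  have rX: "\<And>r. r \<in> R \<Longrightarrow> r \<in> X" unfolding R_def by (rule roots_in)
  have Zc: "2 \<le> card (Zs N V B (cmp X r)) \<and> Zs N V B (cmp X r) \<subseteq> Zs N V B X" if r: "r \<in> R" for r
  proof
    have sub: "cmp X r \<subseteq> X" using cmp_sub[OF rX[OF r]] .
    have fin: "finite (cmp X r)" using sub finX by (rule finite_subset)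
    have ne: "cmp X r \<noteq> {}" using cmp_self by blast
    show "2 \<le> card (Zs N V B (cmp X r))"
      using ham_lemma[OF fin _ ne unif acyc] sub XE Bv by blast
    show "Zs N V B (cmp X r) \<subseteq> Zs N V B X"
      using Zs_sub[OF sub finX cmp_sep[OF rX[OF r]] sB] .
  qed
  have disj: "\<forall>r1\<in>R. \<forall>r2\<in>R. r1 \<noteq> r2 \<longrightarrow> Zs N V B (cmp X r1) \<inter> Zs N V B (cmp X r2) = {}"
  proof (intro ballI impI)
    fix r1 r2 assume r: "r1 \<in> R" "r2 \<in> R" "r1 \<noteq> r2"
    show "Zs N V B (cmp X r1) \<inter> Zs N V B (cmp X r2) = {}"
    proof (rule ccontr)
      assume "Zs N V B (cmp X r1) \<inter> Zs N V B (cmp X r2) \<noteq> {}"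
      then obtain v where v: "v \<in> Zs N V B (cmp X r1)" "v \<in> Zs N V B (cmp X r2)" by auto
      obtain e1 where e1: "e1 \<in> cmp X r1" "B e1 v \<noteq> 0" using Zs_wit[OF v(1)] by blast
      obtain e2 where e2: "e2 \<in> cmp X r2" "B e2 v \<noteq> 0" using Zs_wit[OF v(2)] by blast
      have d: "cmp X r1 \<inter> cmp X r2 = {}" using roots_disj r unfolding R_def by blast
      have "e2 \<in> X" using e2(1) cmp_sub[OF rX[OF r(2)]] by auto
      then have "e2 \<in> X - cmp X r1" using d e2(1) by auto
      then have "set e1 \<inter> set e2 = {}" using cmp_sep[OF rX[OF r(1)]] e1(1) by blast
      moreover have "e1 \<in> X" using e1(1) cmp_sub[OF rX[OF r(1)]] by auto
      ultimately show False using sB e1 e2 \<open>e2 \<in> X\<close> by blast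
    qed
  qed
  have "2 * card R = (\<Sum>r\<in>R. 2)" by simp
  also have "\<dots> \<le> (\<Sum>r\<in>R. card (Zs N V B (cmp X r)))" using Zc by (intro sum_mono) auto
  also have "\<dots> = card (\<Union>r\<in>R. Zs N V B (cmp X r))"
  proof (rule card_UN_disjoint[symmetric, OF finR _ disj])
    show "\<forall>r\<in>R. finite (Zs N V B (cmp X r))" using finV unfolding Zs_def by simp
  qed
  also have "\<dots> \<le> card (Zs N V B X)"
  proof (rule card_mono)
    show "finite (Zs N V B X)" using finV unfolding Zs_def by simp
    show "(\<Union>r\<in>R. Zs N V B (cmp X r)) \<subseteq> Zs N V B X" using Zc by blast
  qed
  finally show ?thesis using a hl R_def by simp
qed

lemma calB_card:
  fixes X :: "'v list set"
  assumes finX: "finite X" and len: "\<forall>e\<in>X. length e = k \<and> distinct e"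
  shows "finite (calB N V X) \<and> card (calB N V X) \<le> (N^k)^card X"
proof -
  define Y where "Y = (\<lambda>e::'v list. {y::'v \<Rightarrow> nat. (\<forall>v. y v < N) \<and> (\<forall>v. v \<notin> set e \<longrightarrow> y v = 0)})"
  define ext where "ext = (\<lambda>e::'v list. \<lambda>f::'v \<Rightarrow> nat. \<lambda>v. if v \<in> set e then f v else 0)"
  have Yimg: "Y e \<subseteq> ext e ` (set e \<rightarrow>\<^sub>E {..<N})" for e
  proof
    fix y assume y: "y \<in> Y e"
    have "y = ext e (restrict y (set e))" using y unfolding Y_def ext_def by (auto simp: fun_eq_iff)
    moreover have "restrict y (set e) \<in> set e \<rightarrow>\<^sub>E {..<N}" using y unfolding Y_def by auto
    ultimately show "y \<in> ext e ` (set e \<rightarrow>\<^sub>E {..<N})" by blast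
  qed
  have cY: "card (Y e) \<le> N^k" "finite (Y e)" if e: "e \<in> X" for e
  proof -
    have fin: "finite (set e \<rightarrow>\<^sub>E {..<N})" by (intro finite_PiE) auto
    have "card (Y e) \<le> card (ext e ` (set e \<rightarrow>\<^sub>E {..<N}))" using Yimg fin by (intro card_mono) auto
    also have "\<dots> \<le> card (set e \<rightarrow>\<^sub>E {..<N})" by (rule card_image_le[OF fin])
    also have "\<dots> = N^card (set e)" by (simp add: card_PiE)
    also have "card (set e) = k" using len e distinct_card by metis
    finally show "card (Y e) \<le> N^k" .
    show "finite (Y e)" using Yimg fin by (meson finite_imageI finite_subset)
  qed
  have "calB N V X \<subseteq> PiE X Y"
  proof
    fix B assume B: "B \<in> calB N V X"
    show "B \<in> PiE X Y"
    proof (rule PiE_I)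
      fix e assume e: "e \<in> X"
      then show "B e \<in> Y e" using B unfolding calB_def ZN_vec_def Y_def supp_vec_def by (auto simp: PiE_iff)
    next
      fix e assume "e \<notin> X"
      then show "B e = undefined" using B unfolding calB_def by (auto simp: PiE_iff extensional_def)
    qed
  qed
  moreover have finP: "finite (PiE X Y)" using cY finX by (auto intro!: finite_PiE)
  ultimately have fin: "finite (calB N V X)" by (rule finite_subset)
  have "card (calB N V X) \<le> card (PiE X Y)"
    using finP \<open>calB N V X \<subseteq> PiE X Y\<close> by (intro card_mono)
  also have "\<dots> = (\<Prod>e\<in>X. card (Y e))" by (rule card_PiE[OF finX])
  also have "\<dots> \<le> (\<Prod>e\<in>X. N^k)" using cY by (intro prod_mono) auto
  also have "\<dots> = (N^k)^card X" by simp
  finally show ?thesis using fin by simp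
qed



theorem lemma7p11:
  fixes N k d l m :: nat and V :: "'v set" and E :: "'v list set"
  assumes "N \<ge> 2"
    and "d > 0" and "l > 0" and "m > 0" and "m \<ge> l"
    and "uniform_hypergraph k V E"
    and "almost_acyclic k E"
    and "finite E" and "card E = m"
    and "\<forall>e\<in>E. card {e'\<in>E. e' \<noteq> e \<and> incident e e'} \<le> d"
  shows "real (\<Sum>E'\<in>Pow E. card (calB_l N V E' l))
           \<le> ((15 * real d * real N ^ k) ^ 4 * real m / real l) powr (real l / 2)"
proof -
  note N2 = assms(1) and d0 = assms(2) and l0 = assms(3) and m0 = assms(4) and lm = assms(5)
  note unif = assms(6) and acyc = assms(7) and finE = assms(8) and cE = assms(9) and deg = assms(10)
  have eE: "\<forall>e\<in>E. length e = k \<and> distinct e"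
    using unif unfolding uniform_hypergraph_def by auto
  define Good where "Good = {X \<in> Pow E. calB_l N V X l \<noteq> {}}"
  have finPow: "finite (Pow E)" using finE by simp
  have GoodP: "Good \<subseteq> Pow E" unfolding Good_def by auto
  have finG: "finite Good" using GoodP finPow by (rule finite_subset)
  have gs: "4 * card X \<le> 5 * l \<and> 2 * card (roots X) \<le> l" if X: "X \<in> Good" for X
  proof -
    obtain B where "B \<in> calB_l N V X l" using X unfolding Good_def by auto
    then show ?thesis using good_struct[OF unif acyc finE _ _ l0] X unfolding Good_def by blast
  qed
  have step1: "(\<Sum>X\<in>Pow E. card (calB_l N V X l)) \<le> (\<Sum>X\<in>Good. (N^k)^card X)"
  proof -
    have "(\<Sum>X\<in>Pow E. card (calB_l N V X l)) = (\<Sum>X\<in>Good. card (calB_l N V X l))"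
      by (rule sum.mono_neutral_right[OF finPow GoodP]) (auto simp: Good_def)
    also have "\<dots> \<le> (\<Sum>X\<in>Good. (N^k)^card X)"
    proof (rule sum_mono)
      fix X assume X: "X \<in> Good"
      then have XE: "X \<subseteq> E" unfolding Good_def by auto
      have finX: "finite X" using XE finE by (rule finite_subset)
      have "card (calB_l N V X l) \<le> card (calB N V X)"
      proof (rule card_mono)
        show "finite (calB N V X)"
          using calB_card[OF finX] eE XE by blast
        show "calB_l N V X l \<subseteq> calB N V X" unfolding calB_l_def by auto
      qed
      also have "\<dots> \<le> (N^k)^card X" using calB_card[OF finX, of k N V] eE XE by blast
      finally show "card (calB_l N V X l) \<le> (N^k)^card X" .
    qed
    finally show ?thesis .
  qed
  define D where "D = real d * real N ^ k"
  have D1: "D \<ge> 1"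
  proof -
    have "real N ^ k \<ge> 1" using N2 by simp
    moreover have "real d \<ge> 1" using d0 by simp
    ultimately show ?thesis unfolding D_def by (metis mult_mono one_le_power mult_1_left dual_order.trans zero_le_one)
  qed
  define y where "y = 8 * D"
  define q where "q = 1 / (8 * real d)"
  have y1: "y \<ge> 1" using D1 y_def by simp
  have q0: "q \<ge> 0" using q_def by simp
  have step2: "real (\<Sum>X\<in>Good. (N^k)^card X) \<le> y powr (3 * real l / 2) * (\<Sum>X\<in>Good. q^card X)"
  proof -
    have "real (\<Sum>X\<in>Good. (N^k)^card X) = (\<Sum>X\<in>Good. real ((N^k)^card X))" by simp
    also have "\<dots> \<le> (\<Sum>X\<in>Good. y powr (3 * real l / 2) * q^card X)"
    proof (rule sum_mono)
      fix X assume X: "X \<in> Good"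
      have "real ((N^k)^card X) = (y * q)^card X"
        using d0 unfolding y_def q_def D_def by (simp add: power_mult_distrib)
      also have "\<dots> = y^card X * q^card X" by (simp add: power_mult_distrib)
      also have "\<dots> \<le> y powr (3 * real l / 2) * q^card X"
      proof (rule mult_right_mono[OF _ zero_le_power[OF q0]])
        have "real (card X) \<le> 3 * real l / 2" using gs[OF X] by simp
        then have "y powr real (card X) \<le> y powr (3 * real l / 2)" using y1 by (intro powr_mono) auto
        then show "y^card X \<le> y powr (3 * real l / 2)" using y1 by (simp add: powr_realpow)
      qed
      finally show "real ((N^k)^card X) \<le> y powr (3 * real l / 2) * q^card X" .
    qed
    also have "\<dots> = y powr (3 * real l / 2) * (\<Sum>X\<in>Good. q^card X)" by (simp add: sum_distrib_left)
    finally show ?thesis .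
  qed
  define nbl where "nbl = (\<lambda>e. SOME xs. set xs = {e'\<in>E. e' \<noteq> e \<and> incident e e'} \<and> distinct xs)"
  define nb where "nb = (\<lambda>e j. nbl e ! j)"
  have nbr: "\<forall>x\<in>E. \<forall>y\<in>E. adjE x y \<longrightarrow> (\<exists>j<d. nb x j = y)"
  proof (intro ballI impI)
    fix x z assume x: "x \<in> E" and z: "z \<in> E" and a: "adjE x z"
    have "\<exists>xs. set xs = {e'\<in>E. e' \<noteq> x \<and> incident x e'} \<and> distinct xs"
      using finE by (intro finite_distinct_list) simp
    then have P: "set (nbl x) = {e'\<in>E. e' \<noteq> x \<and> incident x e'} \<and> distinct (nbl x)"
      unfolding nbl_def by (rule someI_ex)
    then have "z \<in> set (nbl x)" using z a unfolding adjE_def by auto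
    then obtain j where j: "j < length (nbl x)" "nbl x ! j = z" by (meson in_set_conv_nth)
    have "length (nbl x) = card {e'\<in>E. e' \<noteq> x \<and> incident x e'}" using P distinct_card by metis
    then have "length (nbl x) \<le> d" using deg x by simp
    then show "\<exists>j<d. nb x j = z" using j unfolding nb_def by (intro exI[of _ j]) auto
  qed
  have step3: "(\<Sum>X\<in>Good. q^card X) \<le> real (card {R. R \<subseteq> E \<and> 2 * card R \<le> l})"
  proof (rule count_good[OF finE _ _ q0])
    fix X assume "X \<in> Good"
    then show "X \<subseteq> E \<and> 2 * card (roots X) \<le> l" using gs unfolding Good_def by auto
  next
    fix r assume "r \<in> E"
    show "(\<Sum>C\<in>Conn E r. q^card C) \<le> 1" unfolding q_def by (rule conn_sum[OF nbr finE d0])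
  qed
  have step4: "real (card {R. R \<subseteq> E \<and> 2 * card R \<le> l}) \<le> (2 * exp 1 * real m / real l) powr (real l / 2)"
    by (rule card_small_subsets[OF finE cE l0 lm])
  have ypow: "y powr (3 * real l / 2) = (y^3) powr (real l / 2)"
  proof -
    have "y powr (3 * real l / 2) = (y powr 3) powr (real l / 2)" by (simp add: powr_powr)
    also have "y powr 3 = y^3" using y1 by (simp add: powr_realpow)
    finally show ?thesis .
  qed
  have fin_ineq: "y^3 * (2 * exp 1 * real m / real l) \<le> (15 * real d * real N ^ k) ^ 4 * real m / real l"
  proof -
    have "y^3 * 2 * exp 1 \<le> 512 * D^3 * 6" using exp_le D1 unfolding y_def by (simp add: power_mult_distrib)
    also have "\<dots> \<le> 50625 * D^4"
    proof -
      have "D^3 \<le> D^4" using D1 by (simp add: power_increasing)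
      moreover have "D^3 \<ge> 0" using D1 by simp
      ultimately show ?thesis by linarith
    qed
    also have "\<dots> = (15 * real d * real N ^ k) ^ 4" unfolding D_def by (simp add: power_mult_distrib)
    finally have "y^3 * 2 * exp 1 \<le> (15 * real d * real N ^ k) ^ 4" .
    then have "y^3 * 2 * exp 1 * (real m / real l) \<le> (15 * real d * real N ^ k) ^ 4 * (real m / real l)"
      by (rule mult_right_mono) simp
    then show ?thesis by (simp add: mult.assoc)
  qed
  have "real (\<Sum>X\<in>Pow E. card (calB_l N V X l)) \<le> real (\<Sum>X\<in>Good. (N^k)^card X)"
    using step1 by linarith
  also have "\<dots> \<le> y powr (3 * real l / 2) * (\<Sum>X\<in>Good. q^card X)" by (rule step2)
  also have "\<dots> \<le> (y^3) powr (real l / 2) * (2 * exp 1 * real m / real l) powr (real l / 2)"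
    unfolding ypow using step3 step4 by (intro mult_left_mono) auto
  also have "\<dots> = (y^3 * (2 * exp 1 * real m / real l)) powr (real l / 2)"
    using y1 by (subst powr_mult) auto
  also have "\<dots> \<le> ((15 * real d * real N ^ k) ^ 4 * real m / real l) powr (real l / 2)"
    using fin_ineq y1 by (intro powr_mono2) auto
  finally show ?thesis .
qed

end
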